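(* Let $1\le p<\infty$, let $f\in\mathcal U_p(\mathbb{R}^2)$, and set $\varphi_1(y)=\|f_y\|^*_{\operatorname{Lip}\frac1p}$ and $\varphi_2(x)=\|f_x\|^*_{\operatorname{Lip}\frac1p}$. Then $f\in S_0(\mathbb{R}^2)$, and there is a constant $c>0$ depending only on $p$ such that for every $t>0$, $$f^*(t)-f^*(2t)\le c\,t^{1/(2p)}\left(\varphi_1^*\!\left(\tfrac{\sqrt t}{2}\right)+\varphi_2^*\!\left(\tfrac{\sqrt t}{2}\right)\right).$$
   Context: For a function $f$ on $\mathbb{R}^2$, $f_x(y)=f(x,y)$ and $f_y(x)=f(x,y)$ denote the sections. For $\varphi$ on $\mathbb{R}$, $\Delta_h\varphi(t)=\varphi(t+h)-\varphi(t)$; for $\alpha\in(0,1]$, $\|\varphi\|^*_{\operatorname{Lip}\alpha}=\sup_{h>0}h^{-\alpha}\|\Delta_h\varphi\|_\infty$ ($\|\cdot\|_\infty$ the essential supremum), $\operatorname{Lip}\alpha$ is the class of $\varphi\in L^\infty(\mathbb{R})$ with this quantity finite, and $\|\varphi\|_{\operatorname{Lip}\alpha}=\|\varphi\|_\infty+\|\varphi\|^*_{\operatorname{Lip}\alpha}$. $S_0(\mathbb{R}^n)$ is the class of measurable a.e. finite $g$ on $\mathbb{R}^n$ with $|\{|g|>s\}|<\infty$ for all $s>0$; $g^*$ is the non-increasing rearrangement of $g$ on $(0,\infty)$ (non-negative, non-increasing, equimeasurable with $|g|$). $L^{p,1}(\mathbb{R})$ is the set of $g\in S_0(\mathbb{R})$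 with $\int_0^\infty t^{1/p-1}g^*(t)\,dt<\infty$. $\mathcal U_p(\mathbb{R}^2)$ is the set of measurable $f$ on $\mathbb{R}^2$ such that almost every $x$-section and $y$-section lies in $\operatorname{Lip}\frac1p$ and $y\mapsto\|f_y\|_{\operatorname{Lip}\frac1p}$, $x\mapsto\|f_x\|_{\operatorname{Lip}\frac1p}$ belong to $L^{p,1}(\mathbb{R})$. *)

theory Defs
  imports "HOL-Analysis.Analysis" "HOL-Probability.Essential_Supremum"
begin

definition ess_norm :: "(real \<Rightarrow> real) \<Rightarrow> ereal" where
  "ess_norm g = esssup lebesgue (\<lambda>t. ereal \<bar>g t\<bar>)"

definition lip_semi :: "real \<Rightarrow> (real \<Rightarrow> real) \<Rightarrow> ereal" where
  "lip_semi \<alpha> \<phi> = (SUP h\<in>{0<..}. ereal (h powr (-\<alpha>)) * ess_norm (\<lambda>t. \<phi> (t + h) - \<phi> t))"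

definition Lip_class :: "real \<Rightarrow> (real \<Rightarrow> real) \<Rightarrow> bool" where
  "Lip_class \<alpha> \<phi> \<longleftrightarrow> \<phi> \<in> borel_measurable lebesgue \<and> ess_norm \<phi> < \<infinity> \<and> lip_semi \<alpha> \<phi> < \<infinity>"

definition lip_norm :: "real \<Rightarrow> (real \<Rightarrow> real) \<Rightarrow> real" where
  "lip_norm \<alpha> \<phi> = real_of_ereal (ess_norm \<phi>) + real_of_ereal (lip_semi \<alpha> \<phi>)"

text \<open>The class S_0 on R^n (here for any Euclidean space, used with real and real*real).
  Functions are real-valued, hence finite everywhere.\<close>
definition S0 :: "('a::euclidean_space \<Rightarrow> real) \<Rightarrow> bool" where
  "S0 g \<longleftrightarrow> g \<in> borel_measurable lebesgue \<and>
     (\<forall>s>0. emeasure lebesgue {x. s < \<bar>g x\<bar>} < \<infinity>)"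

definition rearr :: "('a::euclidean_space \<Rightarrow> real) \<Rightarrow> real \<Rightarrow> real" where
  "rearr g t = Inf {s::real. 0 \<le> s \<and> emeasure lebesgue {x. s < \<bar>g x\<bar>} \<le> ennreal t}"

definition Lorentz_p1 :: "real \<Rightarrow> (real \<Rightarrow> real) \<Rightarrow> bool" where
  "Lorentz_p1 p g \<longleftrightarrow> S0 g \<and>
     (\<integral>\<^sup>+ t. indicator {0<..} t * ennreal (t powr (1/p - 1) * rearr g t) \<partial>lborel) < \<infinity>"

text \<open>The class U_p(R^2). Sections: f_x(y) = f(x,y), f_y(x) = f(x,y).\<close>
definition U_p :: "real \<Rightarrow> (real \<times> real \<Rightarrow> real) \<Rightarrow> bool" where
  "U_p p f \<longleftrightarrow> f \<in> borel_measurable lebesgue \<and>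
     (AE x in lebesgue. Lip_class (1/p) (\<lambda>y. f (x, y))) \<and>
     (AE y in lebesgue. Lip_class (1/p) (\<lambda>x. f (x, y))) \<and>
     Lorentz_p1 p (\<lambda>y. lip_norm (1/p) (\<lambda>x. f (x, y))) \<and>
     Lorentz_p1 p (\<lambda>x. lip_norm (1/p) (\<lambda>y. f (x, y)))"

end

theory Submission
  imports Defs
begin

lemma ae_eq_measurable_completion:
  fixes f g :: "'a \<Rightarrow> 'b::topological_space"
  assumes g: "g \<in> borel_measurable (completion M)" and ae: "AE x in completion M. f x = g x"
  shows "f \<in> borel_measurable (completion M)"
proof (rule measurableI)
  fix A :: "'b set" assume A: "A \<in> sets borel"
  show "f -` A \<inter> space (completion M) \<in> sets (completion M)"
  proof (rule completion.in_sets_AE)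
    show "g -` A \<inter> space (completion M) \<in> sets (completion M)" using g A by (rule measurable_sets)
    show "AE x in completion M. (x \<in> g -` A \<inter> space (completion M)) = (x \<in> f -` A \<inter> space (completion M))"
      using ae by eventually_elim auto
  qed auto
qed auto

lemma AE_lborel_translate:
  fixes P :: "real \<Rightarrow> bool"
  assumes "AE x in lborel. P x"
  shows "AE x in lborel. P (x + h)"
proof -
  obtain N where N: "N \<in> null_sets lborel" "{x \<in> space lborel. \<not> P x} \<subseteq> N"
    using assms unfolding eventually_ae_filter by auto
  have Nb[measurable]: "N \<in> sets borel" using N(1) by (auto simp: null_sets_def)
  have "AE x in lborel. x \<notin> N" using N(1) by (rule AE_not_in)
  then have "AE x in lborel. h + 1 * x \<notin> N"
    by (intro AE_borel_affine) auto
  then show ?thesis by (rule eventually_mono) (use N(2) in \<open>auto simp: add.commute\<close>)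
qed

lemma AE_lebesgue_translate:
  fixes P :: "real \<Rightarrow> bool"
  assumes "AE x in lebesgue. P x"
  shows "AE x in lebesgue. P (x + h)"
  using assms AE_lborel_translate by (auto simp: AE_completion_iff)

lemma esssup_lebesgue_lborel:
  fixes g :: "'a::euclidean_space \<Rightarrow> ereal"
  assumes "g \<in> borel_measurable borel"
  shows "esssup lebesgue g = esssup lborel g"
proof -
  have m2': "g \<in> borel_measurable lborel" using assms by simp
  have m1: "g \<in> borel_measurable lebesgue" using measurable_completion[OF m2'] .
  have m2: "g \<in> borel_measurable lborel" using assms by simp
  show ?thesis
    by (simp add: esssup_eq_AE[OF m1] esssup_eq_AE[OF m2] AE_completion_iff)
qed

lemma esssup_translate:
  fixes g :: "real \<Rightarrow> ereal"
  assumes [measurable]: "g \<in> borel_measurable borel"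
  shows "esssup lebesgue (\<lambda>x. g (x + q)) = esssup lebesgue g"
proof (rule antisym)
  have "(\<lambda>x. g (x + q)) \<in> borel_measurable lborel" by simp
  note m = measurable_completion[OF this]
  have "g \<in> borel_measurable lborel" by simp
  note m1 = measurable_completion[OF this]
  show "esssup lebesgue (\<lambda>x. g (x + q)) \<le> esssup lebesgue g"
    by (rule esssup_I[OF m]) (auto intro: AE_lebesgue_translate esssup_AE)
  have "AE x in lebesgue. g ((x + - q) + q) \<le> esssup lebesgue (\<lambda>x. g (x + q))"
    by (rule AE_lebesgue_translate) (rule esssup_AE)
  then show "esssup lebesgue g \<le> esssup lebesgue (\<lambda>x. g (x + q))"
    by (intro esssup_I[OF m1]) auto
qed

lemma esssup_nonneg_lebesgue:
  fixes g :: "real \<Rightarrow> ereal"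
  assumes "\<And>x. 0 \<le> g x"
  shows "0 \<le> esssup lebesgue g"
proof -
  have "esssup lebesgue (\<lambda>x::real. 0::ereal) \<le> esssup lebesgue g"
    using esssup_mono[of "\<lambda>x. 0::ereal" lebesgue g] assms by auto
  moreover have "esssup lebesgue (\<lambda>x::real. 0::ereal) = 0"
    by (rule esssup_const) (simp add: emeasure_lborel_UNIV)
  ultimately show ?thesis by simp
qed

lemma esssup_section_measurable:
  fixes g :: "real \<times> real \<Rightarrow> ereal"
  assumes [measurable]: "g \<in> borel_measurable borel"
  shows "(\<lambda>y. esssup lebesgue (\<lambda>x. g (x, y))) \<in> borel_measurable borel"
proof -
  have eq: "esssup lebesgue (\<lambda>x. g (x, y)) = esssup lborel (\<lambda>x. g (x, y))" for y
    by (rule esssup_lebesgue_lborel) simp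
  have iff: "z < esssup lborel (\<lambda>x. g (x, y)) \<longleftrightarrow>
        emeasure lborel ((\<lambda>x. (x, y)) -` {p \<in> space (lborel \<Otimes>\<^sub>M lborel). z < g p}) \<noteq> 0" for z y
  proof
    assume "z < esssup lborel (\<lambda>x. g (x, y))"
    then have "emeasure lborel {x \<in> space lborel. (\<lambda>x. g (x, y)) x > z} > 0"
      by (intro esssup_pos_measure) simp
    then show "emeasure lborel ((\<lambda>x. (x, y)) -` {p \<in> space (lborel \<Otimes>\<^sub>M lborel). z < g p}) \<noteq> 0"
      by (simp add: space_pair_measure vimage_def)
  next
    assume ne: "emeasure lborel ((\<lambda>x. (x, y)) -` {p \<in> space (lborel \<Otimes>\<^sub>M lborel). z < g p}) \<noteq> 0"
    show "z < esssup lborel (\<lambda>x. g (x, y))"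
    proof (rule ccontr)
      assume nz: "\<not> z < esssup lborel (\<lambda>x. g (x, y))"
      have "AE x in lborel. g (x, y) \<le> z"
        using esssup_AE[of "\<lambda>x. g (x, y)" lborel] by (rule eventually_mono) (use nz in auto)
      then have "emeasure lborel {x \<in> space lborel. z < g (x, y)} = 0"
        by (intro emeasure_eq_0_AE) (auto simp: not_less)
      with ne show False by (simp add: space_pair_measure vimage_def)
    qed
  qed
  then have "{y \<in> space borel. z < esssup lborel (\<lambda>x. g (x, y))} =
        {y. emeasure lborel ((\<lambda>x. (x, y)) -` {p \<in> space (lborel \<Otimes>\<^sub>M lborel). z < g p}) \<noteq> 0}" for z
    by auto
  moreover have "{y. emeasure lborel ((\<lambda>x. (x, y)) -` {p \<in> space (lborel \<Otimes>\<^sub>M lborel). z < g p}) \<noteq> 0} \<in> sets borel" for z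
  proof -
    have "{p \<in> space (lborel \<Otimes>\<^sub>M lborel). z < g p} \<in> sets (lborel \<Otimes>\<^sub>M lborel)"
      unfolding lborel_prod by measurable
    from lborel_pair.measurable_emeasure_Pair2[OF this]
    have "(\<lambda>y. emeasure lborel ((\<lambda>x. (x, y)) -` {p \<in> space (lborel \<Otimes>\<^sub>M lborel). z < g p})) \<in> borel_measurable lborel" .
    then have "{y \<in> space lborel. emeasure lborel ((\<lambda>x. (x, y)) -` {p \<in> space (lborel \<Otimes>\<^sub>M lborel). z < g p}) \<noteq> 0} \<in> sets lborel"
      by measurable
    then show ?thesis by simp
  qed
  ultimately have "(\<lambda>y. esssup lborel (\<lambda>x. g (x, y))) \<in> borel_measurable borel"
    by (intro borel_measurableI_greater) simp
  then show ?thesis by (simp add: eq)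
qed

lemma level_sets_lebesgue[measurable]:
  fixes g :: "'a::euclidean_space \<Rightarrow> real"
  assumes g[measurable]: "g \<in> borel_measurable lebesgue"
  shows "{x. c < \<bar>g x\<bar>} \<in> sets lebesgue"
proof -
  have "{x \<in> space lebesgue. c < \<bar>g x\<bar>} \<in> sets lebesgue" by measurable
  then show ?thesis by simp
qed

lemma rearr_lower:
  fixes g :: "'a::euclidean_space \<Rightarrow> real"
  assumes "0 \<le> u" "u < rearr g t"
  shows "ennreal t < emeasure lebesgue {x. u < \<bar>g x\<bar>}"
proof (rule ccontr)
  assume "\<not> ennreal t < emeasure lebesgue {x. u < \<bar>g x\<bar>}"
  then have "u \<in> {s. 0 \<le> s \<and> emeasure lebesgue {x. s < \<bar>g x\<bar>} \<le> ennreal t}"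
    using assms by (auto simp: not_less)
  then have "rearr g t \<le> u" unfolding rearr_def
    by (intro cInf_lower) (auto intro: bdd_belowI[of _ 0])
  with assms show False by simp
qed

lemma rearr_nonneg:
  fixes g :: "'a::euclidean_space \<Rightarrow> real"
  assumes "{s. 0 \<le> s \<and> emeasure lebesgue {x. s < \<bar>g x\<bar>} \<le> ennreal t} \<noteq> {}"
  shows "0 \<le> rearr g t"
  unfolding rearr_def using assms by (intro cInf_greatest) auto

lemma rearr_level:
  fixes g :: "'a::euclidean_space \<Rightarrow> real"
  assumes g[measurable]: "g \<in> borel_measurable lebesgue"
    and ne: "{s. 0 \<le> s \<and> emeasure lebesgue {x. s < \<bar>g x\<bar>} \<le> ennreal t} \<noteq> {}"
  shows "emeasure lebesgue {x. rearr g t < \<bar>g x\<bar>} \<le> ennreal t"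
proof -
  define r where "r = rearr g t"
  define A where "A n = {x. r + 1 / real (Suc n) < \<bar>g x\<bar>}" for n
  have As: "range A \<subseteq> sets lebesgue" unfolding A_def using level_sets_lebesgue[OF g] by auto
  have inc: "incseq A"
  proof (rule incseq_SucI)
    fix n
    have "1 / real (Suc (Suc n)) \<le> 1 / real (Suc n)" by (simp add: frac_le)
    then show "A n \<subseteq> A (Suc n)" unfolding A_def by auto
  qed
  have U: "(\<Union>n. A n) = {x. r < \<bar>g x\<bar>}"
  proof safe
    fix x n assume "x \<in> A n" then show "r < \<bar>g x\<bar>" unfolding A_def
      by (smt (verit) divide_pos_pos mem_Collect_eq of_nat_0_less_iff zero_less_Suc)
  next
    fix x assume "r < \<bar>g x\<bar>"
    then obtain n where "1 / real (Suc n) < \<bar>g x\<bar> - r"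
      using reals_Archimedean by (metis diff_gt_0_iff_gt inverse_eq_divide)
    then have "r + 1 / real (Suc n) < \<bar>g x\<bar>" by linarith
    then show "x \<in> (\<Union>n. A n)" unfolding A_def by blast
  qed
  have le: "emeasure lebesgue (A n) \<le> ennreal t" for n
  proof -
    have "Inf {s. 0 \<le> s \<and> emeasure lebesgue {x. s < \<bar>g x\<bar>} \<le> ennreal t} < r + 1 / real (Suc n)"
      unfolding r_def rearr_def by simp
    from cInf_lessD[OF ne this] obtain u where u: "0 \<le> u" "emeasure lebesgue {x. u < \<bar>g x\<bar>} \<le> ennreal t"
      "u < r + 1 / real (Suc n)" by auto
    have "emeasure lebesgue (A n) \<le> emeasure lebesgue {x. u < \<bar>g x\<bar>}"
      unfolding A_def using u(3) by (intro emeasure_mono) auto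
    with u(2) show ?thesis by simp
  qed
  have "emeasure lebesgue {x. r < \<bar>g x\<bar>} = (SUP n. emeasure lebesgue (A n))"
    using SUP_emeasure_incseq[OF As inc] U by simp
  also have "\<dots> \<le> ennreal t" using le by (intro SUP_least) auto
  finally show ?thesis unfolding r_def .
qed

lemma rearr_nonempty:
  fixes g :: "'a::euclidean_space \<Rightarrow> real"
  assumes g[measurable]: "g \<in> borel_measurable lebesgue"
    and fin: "\<And>s. s > 0 \<Longrightarrow> emeasure lebesgue {x. s < \<bar>g x\<bar>} < \<infinity>"
    and t: "t > 0"
  shows "{s. 0 \<le> s \<and> emeasure lebesgue {x. s < \<bar>g x\<bar>} \<le> ennreal t} \<noteq> {}"
proof -
  define A where "A n = {x. real (Suc n) < \<bar>g x\<bar>}" for n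
  have As: "range A \<subseteq> sets lebesgue" unfolding A_def using level_sets_lebesgue[OF g] by auto
  have dec: "decseq A" unfolding A_def by (intro decseq_SucI) auto
  have I: "(\<Inter>n. A n) = {}"
  proof safe
    fix x assume "x \<in> (\<Inter>n. A n)"
    moreover obtain n where "\<bar>g x\<bar> < real (Suc n)"
      by (metis reals_Archimedean2 less_trans of_nat_less_iff lessI)
    ultimately show "x \<in> {}" unfolding A_def by (metis (mono_tags) INT_E UNIV_I mem_Collect_eq order.asym)
  qed
  have fin': "emeasure lebesgue (A n) \<noteq> \<infinity>" for n
    using fin[of "real (Suc n)"] unfolding A_def by auto
  have "(\<lambda>n. emeasure lebesgue (A n)) \<longlonglongrightarrow> 0"
    using Lim_emeasure_decseq[OF As dec fin'] I by simp
  then have "eventually (\<lambda>n. emeasure lebesgue (A n) < ennreal t) sequentially"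
    using t by (intro order_tendstoD) auto
  then obtain n where "emeasure lebesgue (A n) < ennreal t"
    by (auto simp: eventually_sequentially)
  then have "real (Suc n) \<in> {s. 0 \<le> s \<and> emeasure lebesgue {x. s < \<bar>g x\<bar>} \<le> ennreal t}"
    unfolding A_def by auto
  then show ?thesis by blast
qed

lemma seg_lemma:
  fixes \<phi> :: "real \<Rightarrow> real" and h K \<mu> lam :: real
  assumes phi[measurable]: "\<phi> \<in> borel_measurable borel"
    and h: "h > 0" and mu: "lam + K \<le> \<mu>"
    and lip: "\<And>h'. 0 < h' \<Longrightarrow> h' \<le> h \<Longrightarrow> AE x in lborel. \<bar>\<phi> (x + h') - \<phi> x\<bar> \<le> K"
    and pos: "emeasure lborel {x. \<mu> < \<bar>\<phi> x\<bar>} \<noteq> 0"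
  shows "ennreal h \<le> emeasure lborel {x. lam < \<bar>\<phi> x\<bar>}"
proof -
  define P where "P h' x \<longleftrightarrow> \<not> (0 < h' \<and> h' \<le> h \<and> \<mu> < \<bar>\<phi> x\<bar> \<and> \<bar>\<phi> (x + h')\<bar> \<le> lam)" for h' x
  have each: "AE h' in lborel. AE x in lborel. P h' x"
  proof (rule AE_I2)
    fix h'
    show "AE x in lborel. P h' x"
    proof (cases "0 < h' \<and> h' \<le> h")
      case True
      then show ?thesis using lip[of h'] unfolding P_def
        by (rule_tac eventually_mono) (use mu in auto)
    next
      case False
      then show ?thesis unfolding P_def by auto
    qed
  qed
  have meas: "{z \<in> space (lborel \<Otimes>\<^sub>M lborel). P (fst z) (snd z)} \<in> sets (lborel \<Otimes>\<^sub>M lborel)"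
    unfolding P_def by measurable
  have "AE x in lborel. AE h' in lborel. P h' x"
    using lborel_pair.AE_commute[OF meas] each by simp
  have "\<exists>x. \<mu> < \<bar>\<phi> x\<bar> \<and> (AE h' in lborel. P h' x)"
  proof (rule ccontr)
    assume "\<not> ?thesis"
    then have "AE x in lborel. \<not> \<mu> < \<bar>\<phi> x\<bar>"
      using \<open>AE x in lborel. AE h' in lborel. P h' x\<close> by (rule_tac eventually_mono) auto
    then have "emeasure lborel {x \<in> space lborel. \<mu> < \<bar>\<phi> x\<bar>} = 0"
      by (rule emeasure_eq_0_AE)
    with pos show False by simp
  qed
  then obtain x0 where x0: "\<mu> < \<bar>\<phi> x0\<bar>" "AE h' in lborel. P h' x0" by auto
  have "AE h' in lborel. h' \<in> {0<..h} \<longrightarrow> lam < \<bar>\<phi> (x0 + h')\<bar>"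
    using x0(2) by (rule eventually_mono) (use x0(1) in \<open>auto simp: P_def not_le\<close>)
  then have "AE u in lborel. (- x0 + 1 * u) \<in> {0<..h} \<longrightarrow> lam < \<bar>\<phi> (x0 + (- x0 + 1 * u))\<bar>"
    by (intro AE_borel_affine) auto
  then have "AE u in lborel. u \<in> {x0<..x0+h} \<longrightarrow> u \<in> {x. lam < \<bar>\<phi> x\<bar>}"
    by (rule eventually_mono) auto
  then have "emeasure lborel {x0<..x0+h} \<le> emeasure lborel {x. lam < \<bar>\<phi> x\<bar>}"
  proof (rule emeasure_mono_AE)
    have "{x \<in> space lborel. lam < \<bar>\<phi> x\<bar>} \<in> sets lborel" by measurable
    then show "{x. lam < \<bar>\<phi> x\<bar>} \<in> sets lborel" by simp
  qed
  then show ?thesis using h by simp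
qed

lemma eps_rat_lemma:
  fixes X Y Lr h \<alpha> :: real
  assumes a: "\<alpha> > 0" and L: "Lr \<ge> 0" and h: "h > 0"
    and H: "\<And>q. q \<in> \<rat> \<Longrightarrow> 0 < q \<Longrightarrow> q < h \<Longrightarrow> X \<le> Y + (h - q) powr \<alpha> * Lr"
  shows "X \<le> Y"
proof (rule ccontr)
  assume "\<not> X \<le> Y"
  then have d: "X - Y > 0" by simp
  define e where "e = (X - Y) / (2 * (Lr + 1))"
  have e: "e > 0" unfolding e_def using d L by simp
  define \<delta> where "\<delta> = min (h/2) (e powr (1/\<alpha>))"
  have \<delta>: "\<delta> > 0" "\<delta> \<le> h/2" "\<delta> \<le> e powr (1/\<alpha>)" unfolding \<delta>_def using h e by auto
  obtain q where q: "q \<in> \<rat>" "h - \<delta> < q" "q < h" using Rats_dense_in_real[of "h - \<delta>" h] \<delta> by auto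
  have q0: "0 < q" using q \<delta> h by simp
  have "(h - q) powr \<alpha> \<le> \<delta> powr \<alpha>" using q a by (intro powr_mono2) auto
  also have "\<dots> \<le> (e powr (1/\<alpha>)) powr \<alpha>" using \<delta> a by (intro powr_mono2) auto
  also have "\<dots> = e" using a e by (simp add: powr_powr)
  finally have hq: "(h - q) powr \<alpha> \<le> e" .
  have "(h - q) powr \<alpha> * Lr \<le> e * Lr" using hq L by (intro mult_right_mono) auto
  also have "e * Lr < X - Y"
  proof -
    have r: "Lr / (2 * (Lr + 1)) < 1" using L by (simp add: divide_less_eq)
    have "e * Lr = (X - Y) * (Lr / (2 * (Lr + 1)))" unfolding e_def by simp
    also have "\<dots> < (X - Y) * 1" using d r by (intro mult_strict_left_mono) auto
    finally show ?thesis by simp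
  qed
  finally have "X > Y + (h - q) powr \<alpha> * Lr" by simp
  with H[OF q(1) q0 q(3)] show False by simp
qed

lemma lip_semi_rat:
  fixes \<phi> :: "real \<Rightarrow> real" and \<alpha> :: real
  assumes phi[measurable]: "\<phi> \<in> borel_measurable borel" and a: "\<alpha> > 0"
    and fin: "lip_semi \<alpha> \<phi> < \<infinity>"
  shows "lip_semi \<alpha> \<phi> = (SUP q\<in>{q\<in>\<rat>. 0 < q}. ereal (q powr (-\<alpha>)) * ess_norm (\<lambda>t. \<phi> (t + q) - \<phi> t))"
proof -
  define E where "E h = ess_norm (\<lambda>t. \<phi> (t + h) - \<phi> t)" for h
  define T where "T h = ereal (h powr (-\<alpha>)) * E h" for h
  define Q where "Q = (SUP q\<in>{q\<in>\<rat>. 0 < q}. T q)"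
  have L: "lip_semi \<alpha> \<phi> = (SUP h\<in>{0<..}. T h)" unfolding lip_semi_def T_def E_def by simp
  have E0: "0 \<le> E h" for h unfolding E_def ess_norm_def by (rule esssup_nonneg_lebesgue) simp
  have T0: "0 \<le> T h" if "h > 0" for h unfolding T_def using E0[of h] that by simp
  have TL: "T h \<le> lip_semi \<alpha> \<phi>" if "h > 0" for h unfolding L using that by (intro SUP_upper) auto
  have QL: "Q \<le> lip_semi \<alpha> \<phi>" unfolding Q_def L by (rule SUP_subset_mono) auto
  have Q0: "0 \<le> Q" unfolding Q_def using T0[of 1] by (intro SUP_upper2[of 1]) auto
  have L0: "0 \<le> lip_semi \<alpha> \<phi>" using T0[of 1] TL[of 1] by simp
  obtain Lr where Lr: "lip_semi \<alpha> \<phi> = ereal Lr" "0 \<le> Lr"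
    using fin L0 by (cases "lip_semi \<alpha> \<phi>") auto
  obtain Qr where Qr: "Q = ereal Qr" "0 \<le> Qr"
    using QL Q0 Lr by (cases Q) auto
  have Ebound: "E h \<le> ereal (h powr \<alpha>) * C" if "h > 0" "T h \<le> C" for h C
  proof -
    have hh: "h powr \<alpha> * h powr (-\<alpha>) = 1" using that(1) by (simp add: powr_minus)
    have "ereal (h powr \<alpha>) * T h = ereal (h powr \<alpha>) * ereal (h powr (-\<alpha>)) * E h"
      unfolding T_def by (metis mult.assoc times_ereal.simps(1))
    also have "\<dots> = E h" by (simp only: times_ereal.simps(1) hh) simp
    finally have "E h = ereal (h powr \<alpha>) * T h" by simp
    also have "\<dots> \<le> ereal (h powr \<alpha>) * C" using that by (intro ereal_mult_left_mono) auto
    finally show ?thesis .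
  qed
  obtain Er where Er: "E h = ereal (Er h)" "0 \<le> Er h" "Er h \<le> h powr \<alpha> * Lr" if "h > 0" for h
  proof -
    have "\<exists>r. E h = ereal r \<and> 0 \<le> r \<and> r \<le> h powr \<alpha> * Lr" if "h > 0" for h
    proof -
      have "E h \<le> ereal (h powr \<alpha>) * ereal Lr" using Ebound[OF that TL[OF that]] Lr by simp
      then show ?thesis using E0[of h] by (cases "E h") auto
    qed
    then show ?thesis using that by metis
  qed
  have Eq: "Er q \<le> q powr \<alpha> * Qr" if "q \<in> \<rat>" "q > 0" for q
  proof -
    have "T q \<le> Q" unfolding Q_def using that by (intro SUP_upper) auto
    from Ebound[OF that(2) this] show ?thesis using Er[OF that(2)] Qr by simp
  qed
  have tri: "Er h \<le> Er q + Er (h - q)" if "0 < q" "q < h" for q h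
  proof -
    have m1: "(\<lambda>t. ereal \<bar>\<phi> (t + h) - \<phi> t\<bar>) \<in> borel_measurable lebesgue"
      using measurable_completion[of "\<lambda>t. ereal \<bar>\<phi> (t + h) - \<phi> t\<bar>" lborel borel] by simp
    have "E h \<le> esssup lebesgue (\<lambda>t. ereal \<bar>\<phi> (t + q) - \<phi> t\<bar> + ereal \<bar>\<phi> ((t + q) + (h - q)) - \<phi> (t + q)\<bar>)"
      unfolding E_def ess_norm_def
    proof (rule esssup_mono[OF m1])
      fix t
      have "\<bar>\<phi> (t + h) - \<phi> t\<bar> \<le> \<bar>\<phi> (t + q) - \<phi> t\<bar> + \<bar>\<phi> ((t + q) + (h - q)) - \<phi> (t + q)\<bar>"
        using abs_triangle_ineq[of "\<phi> (t + q) - \<phi> t" "\<phi> ((t + q) + (h - q)) - \<phi> (t + q)"]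
        by (simp add: algebra_simps)
      then show "ereal \<bar>\<phi> (t + h) - \<phi> t\<bar> \<le> ereal \<bar>\<phi> (t + q) - \<phi> t\<bar> + ereal \<bar>\<phi> ((t + q) + (h - q)) - \<phi> (t + q)\<bar>"
        by simp
    qed
    also have "\<dots> \<le> E q + esssup lebesgue (\<lambda>t. (\<lambda>s. ereal \<bar>\<phi> (s + (h - q)) - \<phi> s\<bar>) (t + q))"
      unfolding E_def ess_norm_def by (rule esssup_add)
    also have "esssup lebesgue (\<lambda>t. (\<lambda>s. ereal \<bar>\<phi> (s + (h - q)) - \<phi> s\<bar>) (t + q)) = E (h - q)"
      unfolding E_def ess_norm_def by (rule esssup_translate) simp
    finally show ?thesis using Er[of h] Er[of q] Er[of "h - q"] that by simp
  qed
  have "T h \<le> Q" if h: "h > 0" for h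
  proof -
    have "Er h \<le> h powr \<alpha> * Qr"
    proof (rule eps_rat_lemma[OF a Lr(2) h])
      fix q assume q: "q \<in> \<rat>" "0 < q" "q < h"
      have "Er h \<le> Er q + Er (h - q)" by (rule tri) (use q in auto)
      also have "\<dots> \<le> q powr \<alpha> * Qr + (h - q) powr \<alpha> * Lr"
        using Eq[OF q(1,2)] Er(3)[of "h - q"] q by simp
      also have "q powr \<alpha> * Qr \<le> h powr \<alpha> * Qr"
        using q a Qr by (intro mult_right_mono powr_mono2) auto
      finally show "Er h \<le> h powr \<alpha> * Qr + (h - q) powr \<alpha> * Lr" by simp
    qed
    then have "h powr (-\<alpha>) * Er h \<le> h powr (-\<alpha>) * (h powr \<alpha> * Qr)"
      by (intro mult_left_mono) auto
    also have "\<dots> = Qr" using h by (simp add: powr_minus field_simps)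
    finally show ?thesis unfolding T_def using Er[OF h] Qr by simp
  qed
  then have "lip_semi \<alpha> \<phi> \<le> Q" unfolding L by (intro SUP_least) auto
  with QL show ?thesis unfolding Q_def T_def E_def by simp
qed

lemma sets_lborel2: "sets (lborel \<Otimes>\<^sub>M lborel) = sets (borel \<Otimes>\<^sub>M (borel::real measure))"
  by (intro sets_pair_measure_cong) auto

lemma AE_lebesgue2_iff: "(AE z in (lebesgue :: (real \<times> real) measure). P z) \<longleftrightarrow> (AE z in lborel \<Otimes>\<^sub>M lborel. P z)"
  by (metis AE_completion_iff lborel_prod)

lemma AE_sections:
  fixes P :: "real \<times> real \<Rightarrow> bool"
  assumes "AE z in lebesgue. P z"
  shows "AE y in lborel. AE x in lborel. P (x, y)" "AE x in lborel. AE y in lborel. P (x, y)"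
proof -
  have "AE z in lborel \<Otimes>\<^sub>M lborel. P z" using assms by (simp add: AE_lebesgue2_iff)
  then obtain N where N: "N \<in> sets (lborel \<Otimes>\<^sub>M lborel)" "emeasure (lborel \<Otimes>\<^sub>M lborel) N = 0"
      "{z \<in> space (lborel \<Otimes>\<^sub>M lborel). \<not> P z} \<subseteq> N"
    unfolding eventually_ae_filter null_sets_def by auto
  have ae: "AE z in lborel \<Otimes>\<^sub>M lborel. z \<notin> N" using N by (intro AE_not_in) auto
  have 1: "AE x in lborel. AE y in lborel. (x, y) \<notin> N" using lborel_pair.AE_pair[OF ae] by simp
  have meas: "{z \<in> space (lborel \<Otimes>\<^sub>M lborel). (fst z, snd z) \<notin> N} \<in> sets (lborel \<Otimes>\<^sub>M lborel)"
  proof -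
    have "{z \<in> space (lborel \<Otimes>\<^sub>M lborel). (fst z, snd z) \<notin> N} = space (lborel \<Otimes>\<^sub>M lborel) - N" by auto
    then show ?thesis using N(1) by (metis sets.compl_sets)
  qed
  have 2: "AE y in lborel. AE x in lborel. (x, y) \<notin> N"
    using lborel_pair.AE_commute[OF meas] 1 by simp
  show "AE y in lborel. AE x in lborel. P (x, y)"
    using 2 by (rule eventually_mono) (rule eventually_mono, use N(3) in \<open>auto simp: space_pair_measure\<close>)
  show "AE x in lborel. AE y in lborel. P (x, y)"
    using 1 by (rule eventually_mono) (rule eventually_mono, use N(3) in \<open>auto simp: space_pair_measure\<close>)
qed

lemma AE_from_sections_x:
  fixes P :: "real \<times> real \<Rightarrow> bool"
  assumes [measurable]: "Measurable.pred (borel \<Otimes>\<^sub>M borel) P"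
    and "AE x in lborel. AE y in lborel. P (x, y)"
  shows "AE z in lebesgue. P z"
proof -
  have "{z \<in> space (lborel \<Otimes>\<^sub>M lborel). P z} \<in> sets (lborel \<Otimes>\<^sub>M lborel)"
    unfolding sets_lborel2 using assms(1) by (simp add: pred_def space_pair_measure)
  then have "AE z in lborel \<Otimes>\<^sub>M lborel. P z" using assms(2) by (rule lborel_pair.AE_pair_measure)
  then show ?thesis by (simp add: AE_lebesgue2_iff)
qed

lemma AE_from_sections_y:
  fixes P :: "real \<times> real \<Rightarrow> bool"
  assumes [measurable]: "Measurable.pred (borel \<Otimes>\<^sub>M borel) P"
    and "AE y in lborel. AE x in lborel. P (x, y)"
  shows "AE z in lebesgue. P z"
proof -
  have meas: "{z \<in> space (lborel \<Otimes>\<^sub>M lborel). P (fst z, snd z)} \<in> sets (lborel \<Otimes>\<^sub>M lborel)"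
    unfolding sets_lborel2 using assms(1) by (simp add: pred_def space_pair_measure)
  have "AE x in lborel. AE y in lborel. P (x, y)"
    using lborel_pair.AE_commute[OF meas] assms(2) by simp
  then show ?thesis by (rule AE_from_sections_x[OF assms(1)])
qed

lemma transfer_ess:
  fixes \<phi> \<psi> :: "real \<Rightarrow> real"
  assumes "\<phi> \<in> borel_measurable lebesgue" and [measurable]: "\<psi> \<in> borel_measurable borel"
    and ae: "AE x in lborel. \<phi> x = \<psi> x"
  shows "ess_norm (\<lambda>t. \<phi> (t + h) - \<phi> t) = ess_norm (\<lambda>t. \<psi> (t + h) - \<psi> t)"
proof -
  have ae': "AE x in lebesgue. \<phi> x = \<psi> x" using ae by (simp add: AE_completion_iff)
  have ae2: "AE x in lebesgue. ereal \<bar>\<phi> (x + h) - \<phi> x\<bar> = ereal \<bar>\<psi> (x + h) - \<psi> x\<bar>"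
    using AE_lebesgue_translate[OF ae', of h] ae' by eventually_elim simp
  have m2: "(\<lambda>x. ereal \<bar>\<psi> (x + h) - \<psi> x\<bar>) \<in> borel_measurable lebesgue"
    using measurable_completion[of "\<lambda>x. ereal \<bar>\<psi> (x + h) - \<psi> x\<bar>" lborel borel] by simp
  have m1: "(\<lambda>x. ereal \<bar>\<phi> (x + h) - \<phi> x\<bar>) \<in> borel_measurable lebesgue"
    by (rule ae_eq_measurable_completion[OF m2 ae2])
  show ?thesis unfolding ess_norm_def by (rule esssup_AE_cong[OF m1 m2 ae2])
qed

lemma transfer_lip:
  fixes \<phi> \<psi> :: "real \<Rightarrow> real"
  assumes "\<phi> \<in> borel_measurable lebesgue" and "\<psi> \<in> borel_measurable borel"
    and "AE x in lborel. \<phi> x = \<psi> x"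
  shows "lip_semi \<alpha> \<phi> = lip_semi \<alpha> \<psi>"
  unfolding lip_semi_def using transfer_ess[OF assms] by simp

lemma ess_norm_nonneg: "0 \<le> ess_norm g"
  unfolding ess_norm_def by (rule esssup_nonneg_lebesgue) simp

lemma lip_semi_nonneg: "0 \<le> lip_semi \<alpha> g"
proof -
  have "0 \<le> ereal (1 powr (-\<alpha>)) * ess_norm (\<lambda>t. g (t + 1) - g t)"
    using ess_norm_nonneg by simp
  also have "\<dots> \<le> lip_semi \<alpha> g" unfolding lip_semi_def by (intro SUP_upper) auto
  finally show ?thesis .
qed

lemma lip_bound:
  fixes \<phi> :: "real \<Rightarrow> real"
  assumes L: "lip_semi \<alpha> \<phi> \<le> ereal a" and h': "0 < h'" "h' \<le> h" and a: "\<alpha> > 0"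
  shows "AE x in lborel. \<bar>\<phi> (x + h') - \<phi> x\<bar> \<le> a * h powr \<alpha>"
proof -
  have a0: "0 \<le> a" using lip_semi_nonneg[of \<alpha> \<phi>] L by (metis ereal_less_eq(5) order.trans)
  define E where "E = ess_norm (\<lambda>t. \<phi> (t + h') - \<phi> t)"
  have "ereal (h' powr (-\<alpha>)) * E \<le> lip_semi \<alpha> \<phi>" unfolding lip_semi_def E_def using h' by (intro SUP_upper) auto
  also note L
  finally have T: "ereal (h' powr (-\<alpha>)) * E \<le> ereal a" .
  have E0: "0 \<le> E" unfolding E_def by (rule ess_norm_nonneg)
  have hh: "h' powr \<alpha> * h' powr (-\<alpha>) = 1" using h' by (simp add: powr_minus)
  have "E = ereal (h' powr \<alpha>) * (ereal (h' powr (-\<alpha>)) * E)"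
    by (metis mult.assoc times_ereal.simps(1) hh one_ereal_def mult_1)
  also have "\<dots> \<le> ereal (h' powr \<alpha>) * ereal a" using T by (intro ereal_mult_left_mono) auto
  also have "\<dots> \<le> ereal (h powr \<alpha>) * ereal a"
    using h' a a0 by (intro ereal_mult_right_mono) (auto intro: powr_mono2)
  finally have Eb: "E \<le> ereal (a * h powr \<alpha>)" by (simp add: mult.commute)
  have "AE x in lebesgue. ereal \<bar>\<phi> (x + h') - \<phi> x\<bar> \<le> E"
    unfolding E_def ess_norm_def by (rule esssup_AE)
  then have "AE x in lebesgue. \<bar>\<phi> (x + h') - \<phi> x\<bar> \<le> a * h powr \<alpha>"
    by (rule eventually_mono) (use Eb in \<open>metis ereal_less_eq(3) order.trans\<close>)
  then show ?thesis by (simp add: AE_completion_iff)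
qed

lemma section_borel:
  fixes F :: "real \<Rightarrow> real \<Rightarrow> real"
  assumes F[measurable]: "(\<lambda>z. F (fst z) (snd z)) \<in> borel_measurable (borel \<Otimes>\<^sub>M borel)"
  shows "(\<lambda>x. F x y) \<in> borel_measurable borel"
proof -
  have "(\<lambda>x. (x, y)) \<in> borel \<rightarrow>\<^sub>M (borel \<Otimes>\<^sub>M borel)" by measurable
  from measurable_compose[OF this F] show ?thesis by simp
qed

lemma dir_lip:
  fixes f F :: "real \<Rightarrow> real \<Rightarrow> real" and \<alpha> :: real
  assumes F[measurable]: "(\<lambda>z. F (fst z) (snd z)) \<in> borel_measurable (borel \<Otimes>\<^sub>M borel)"
    and a: "\<alpha> > 0"
    and eq: "AE y in lborel. AE x in lborel. f x y = F x y"
    and lip: "AE y in lborel. Lip_class \<alpha> (\<lambda>x. f x y)"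
  shows "\<exists>\<Phi>. \<Phi> \<in> borel_measurable borel \<and>
    (AE y in lborel. lip_semi \<alpha> (\<lambda>x. F x y) = ereal (\<Phi> y) \<and> lip_semi \<alpha> (\<lambda>x. f x y) = ereal (\<Phi> y))"
proof -
  define Q where "Q y = (SUP q\<in>{q\<in>\<rat>. 0 < q}. ereal (q powr (-\<alpha>)) * ess_norm (\<lambda>t. F (t + q) y - F t y))" for y
  define \<Phi> where "\<Phi> y = real_of_ereal (Q y)" for y
  have mq: "(\<lambda>y. ess_norm (\<lambda>t. F (t + q) y - F t y)) \<in> borel_measurable borel" for q
  proof -
    have "(\<lambda>z. (fst z + q, snd z)) \<in> (borel \<Otimes>\<^sub>M borel) \<rightarrow>\<^sub>M (borel \<Otimes>\<^sub>M borel)" by measurable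
    from measurable_compose[OF this F]
    have [measurable]: "(\<lambda>z. F (fst z + q) (snd z)) \<in> borel_measurable (borel \<Otimes>\<^sub>M borel)" by simp
    have "(\<lambda>z. ereal \<bar>F (fst z + q) (snd z) - F (fst z) (snd z)\<bar>) \<in> borel_measurable (borel \<Otimes>\<^sub>M borel)"
      by measurable
    then have "(\<lambda>z. ereal \<bar>F (fst z + q) (snd z) - F (fst z) (snd z)\<bar>) \<in> borel_measurable borel"
      by (simp add: borel_prod)
    from esssup_section_measurable[OF this] show ?thesis unfolding ess_norm_def by simp
  qed
  have cnt: "countable {q\<in>\<rat>. (0::real) < q}" by (rule countable_subset[OF _ countable_rat]) auto
  have mQ: "Q \<in> borel_measurable borel" unfolding Q_def
    using mq by (intro borel_measurable_SUP[OF cnt] borel_measurable_ereal_times borel_measurable_const)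
  then have mPhi: "\<Phi> \<in> borel_measurable borel" unfolding \<Phi>_def by (rule borel_measurable_real_of_ereal)
  have "AE y in lborel. lip_semi \<alpha> (\<lambda>x. F x y) = ereal (\<Phi> y) \<and> lip_semi \<alpha> (\<lambda>x. f x y) = ereal (\<Phi> y)"
    using eq lip
  proof eventually_elim
    case (elim y)
    have mf: "(\<lambda>x. f x y) \<in> borel_measurable lebesgue" and fin: "lip_semi \<alpha> (\<lambda>x. f x y) < \<infinity>"
      using elim(2) unfolding Lip_class_def by auto
    have Fy: "(\<lambda>x. F x y) \<in> borel_measurable borel" by (rule section_borel[OF F])
    have tr: "lip_semi \<alpha> (\<lambda>x. f x y) = lip_semi \<alpha> (\<lambda>x. F x y)"
      by (rule transfer_lip[OF mf Fy elim(1)])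
    have finF: "lip_semi \<alpha> (\<lambda>x. F x y) < \<infinity>" using fin tr by simp
    have "lip_semi \<alpha> (\<lambda>x. F x y) = Q y" unfolding Q_def by (rule lip_semi_rat[OF Fy a finF])
    moreover have "0 \<le> lip_semi \<alpha> (\<lambda>x. F x y)" by (rule lip_semi_nonneg)
    ultimately have "lip_semi \<alpha> (\<lambda>x. F x y) = ereal (\<Phi> y)"
      unfolding \<Phi>_def using finF by (cases "Q y") auto
    then show ?case using tr by simp
  qed
  then show ?thesis using mPhi by blast
qed

lemma dir_ess:
  fixes f F :: "real \<Rightarrow> real \<Rightarrow> real" and \<alpha> :: real
  assumes eq: "AE y in lborel. AE x in lborel. f x y = F x y"
    and lip: "AE y in lborel. Lip_class \<alpha> (\<lambda>x. f x y)"
  shows "AE y in lborel. AE x in lborel. \<bar>F x y\<bar> \<le> lip_norm \<alpha> (\<lambda>x. f x y)"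
  using eq lip
proof eventually_elim
  case (elim y)
  have fin: "ess_norm (\<lambda>x. f x y) < \<infinity>" "lip_semi \<alpha> (\<lambda>x. f x y) < \<infinity>"
    using elim(2) unfolding Lip_class_def by auto
  obtain e where e: "ess_norm (\<lambda>x. f x y) = ereal e" "0 \<le> e"
    using fin(1) ess_norm_nonneg[of "\<lambda>x. f x y"] by (cases "ess_norm (\<lambda>x. f x y)") auto
  obtain l where l: "lip_semi \<alpha> (\<lambda>x. f x y) = ereal l" "0 \<le> l"
    using fin(2) lip_semi_nonneg[of \<alpha> "\<lambda>x. f x y"] by (cases "lip_semi \<alpha> (\<lambda>x. f x y)") auto
  have "lip_norm \<alpha> (\<lambda>x. f x y) = e + l" unfolding lip_norm_def using e l by simp
  have "AE x in lebesgue. ereal \<bar>f x y\<bar> \<le> ess_norm (\<lambda>x. f x y)"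
    unfolding ess_norm_def by (rule esssup_AE)
  then have "AE x in lborel. ereal \<bar>f x y\<bar> \<le> ess_norm (\<lambda>x. f x y)" by (simp add: AE_completion_iff)
  moreover have "\<bar>F x y\<bar> \<le> lip_norm \<alpha> (\<lambda>x. f x y)"
    if "ereal \<bar>f x y\<bar> \<le> ess_norm (\<lambda>x. f x y)" "f x y = F x y" for x
  proof -
    have "\<bar>f x y\<bar> \<le> e" using that(1) e(1) by simp
    then show ?thesis using that(2) l(2) \<open>lip_norm \<alpha> (\<lambda>x. f x y) = e + l\<close> by simp
  qed
  ultimately show ?case using elim(1) by (auto elim: eventually_mp[rotated])
qed

lemma borel_rep1:
  fixes g :: "'a::euclidean_space \<Rightarrow> real"
  assumes "g \<in> borel_measurable lebesgue"
  shows "\<exists>G. G \<in> borel_measurable borel \<and> (AE x in lborel. g x = G x)"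
proof -
  obtain G where "G \<in> borel_measurable lborel" "AE x in lborel. g x = G x"
    using completion_ex_borel_measurable_real[OF assms] by auto
  then show ?thesis by (intro exI[of _ G]) simp
qed

lemma level_le:
  fixes g G :: "real \<Rightarrow> real"
  assumes g: "g \<in> borel_measurable lebesgue" and G[measurable]: "G \<in> borel_measurable borel"
    and ae: "AE x in lborel. g x = G x"
  shows "emeasure lborel {x. s < G x} \<le> emeasure lebesgue {x. s < \<bar>g x\<bar>}"
proof -
  have Gs: "{x. s < G x} \<in> sets lborel"
  proof -
    have "{x \<in> space lborel. s < G x} \<in> sets lborel" by measurable
    then show ?thesis by simp
  qed
  have "emeasure lborel {x. s < G x} = emeasure lebesgue {x. s < G x}"
    using Gs by simp
  also have "\<dots> \<le> emeasure lebesgue {x. s < \<bar>g x\<bar>}"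
  proof (rule emeasure_mono_AE)
    show "AE x in lebesgue. x \<in> {x. s < G x} \<longrightarrow> x \<in> {x. s < \<bar>g x\<bar>}"
      using ae by (simp add: AE_completion_iff) (rule eventually_mono, auto)
    show "{x. s < \<bar>g x\<bar>} \<in> sets lebesgue" by (rule level_sets_lebesgue[OF g])
  qed
  finally show ?thesis .
qed

lemma sets_lborel2': "sets (lborel :: (real \<times> real) measure) = sets (borel \<Otimes>\<^sub>M borel)"
  by (metis borel_prod sets_lborel)

lemma rect_bound:
  fixes A B :: "real set"
  assumes A: "A \<in> sets borel" and B: "B \<in> sets borel"
    and "emeasure lborel A \<le> ennreal u" "emeasure lborel B \<le> ennreal v" "0 \<le> u" "0 \<le> v"
  shows "emeasure lebesgue (A \<times> B) \<le> ennreal (u * v)" and "A \<times> B \<in> sets lebesgue"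
proof -
  have AB: "A \<times> B \<in> sets (lborel :: (real \<times> real) measure)"
    unfolding sets_lborel2' using A B by auto
  have "emeasure lebesgue (A \<times> B) = emeasure (lborel :: (real \<times> real) measure) (A \<times> B)"
    using AB by simp
  also have "\<dots> = emeasure (lborel \<Otimes>\<^sub>M lborel) (A \<times> B)" by (simp add: lborel_prod)
  also have "\<dots> = emeasure lborel A * emeasure lborel B"
    using A B by (intro lborel.emeasure_pair_measure_Times) auto
  also have "\<dots> \<le> ennreal u * ennreal v" using assms by (intro mult_mono) auto
  also have "\<dots> = ennreal (u * v)" using assms by (simp add: ennreal_mult)
  finally show "emeasure lebesgue (A \<times> B) \<le> ennreal (u * v)" .
  show "A \<times> B \<in> sets lebesgue" using AB by simp
qed

lemma ennreal_div_bound: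
  assumes "ennreal h * m \<le> ennreal c" "h > 0" "c \<ge> 0"
  shows "m \<le> ennreal (c / h)"
proof -
  have "m = ennreal (1 / h) * (ennreal h * m)"
    using assms(2) by (simp add: mult.assoc[symmetric] ennreal_mult[symmetric])
  also have "\<dots> \<le> ennreal (1 / h) * ennreal c" using assms(1) by (intro mult_left_mono) auto
  also have "\<dots> = ennreal (c / h)" using assms by (simp add: ennreal_mult[symmetric])
  finally show ?thesis .
qed

lemma cheb_y:
  fixes F :: "real \<times> real \<Rightarrow> real"
  assumes F[measurable]: "F \<in> borel_measurable (borel \<Otimes>\<^sub>M borel)" and h: "h > 0" and c: "c \<ge> 0"
    and D: "emeasure lebesgue {z. lam < \<bar>F z\<bar>} \<le> ennreal c"
  shows "emeasure lborel {y. ennreal h \<le> emeasure lborel {x. lam < \<bar>F (x, y)\<bar>}} \<le> ennreal (c / h)"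
    and "{y. ennreal h \<le> emeasure lborel {x. lam < \<bar>F (x, y)\<bar>}} \<in> sets borel"
proof -
  define Dset where "Dset = {z. lam < \<bar>F z\<bar>}"
  have "{z \<in> space (borel \<Otimes>\<^sub>M borel). lam < \<bar>F z\<bar>} \<in> sets (borel \<Otimes>\<^sub>M borel)" by measurable
  then have Ds: "Dset \<in> sets (lborel \<Otimes>\<^sub>M lborel)" unfolding Dset_def sets_lborel2 by (simp add: space_pair_measure)
  have sec: "(\<lambda>x. (x, y)) -` Dset = {x. lam < \<bar>F (x, y)\<bar>}" for y
    unfolding Dset_def by auto
  have mS: "(\<lambda>y. emeasure lborel {x. lam < \<bar>F (x, y)\<bar>}) \<in> borel_measurable borel"
    using lborel_pair.measurable_emeasure_Pair2[OF Ds] unfolding sec by simp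
  define Y where "Y = {y. ennreal h \<le> emeasure lborel {x. lam < \<bar>F (x, y)\<bar>}}"
  have Ys: "Y \<in> sets borel"
  proof -
    have "{y \<in> space borel. ennreal h \<le> emeasure lborel {x. lam < \<bar>F (x, y)\<bar>}} \<in> sets borel"
      using mS by measurable
    then show ?thesis unfolding Y_def by simp
  qed
  have "ennreal h * emeasure lborel Y = (\<integral>\<^sup>+ y. ennreal h * indicator Y y \<partial>lborel)"
    using Ys by (simp add: nn_integral_cmult_indicator)
  also have "\<dots> \<le> (\<integral>\<^sup>+ y. emeasure lborel ((\<lambda>x. (x, y)) -` Dset) \<partial>lborel)"
    by (intro nn_integral_mono) (auto simp: sec Y_def indicator_def)
  also have "\<dots> = emeasure (lborel \<Otimes>\<^sub>M lborel) Dset"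
    by (rule lborel_pair.emeasure_pair_measure_alt2[OF Ds, symmetric])
  also have "\<dots> = emeasure lebesgue {z. lam < \<bar>F z\<bar>}"
  proof -
    have "Dset = {z. lam < \<bar>F z\<bar>}" unfolding Dset_def by simp
    moreover have "{z. lam < \<bar>F z\<bar>} \<in> sets (lborel :: (real \<times> real) measure)"
      using Ds unfolding sets_lborel2 sets_lborel2' Dset_def by simp
    ultimately show ?thesis by (simp add: lborel_prod)
  qed
  also note D
  finally show "emeasure lborel {y. ennreal h \<le> emeasure lborel {x. lam < \<bar>F (x, y)\<bar>}} \<le> ennreal (c / h)"
    unfolding Y_def[symmetric] using h c by (intro ennreal_div_bound) auto
  show "{y. ennreal h \<le> emeasure lborel {x. lam < \<bar>F (x, y)\<bar>}} \<in> sets borel" using Ys unfolding Y_def .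
qed

lemma cheb_x:
  fixes F :: "real \<times> real \<Rightarrow> real"
  assumes F[measurable]: "F \<in> borel_measurable (borel \<Otimes>\<^sub>M borel)" and h: "h > 0" and c: "c \<ge> 0"
    and D: "emeasure lebesgue {z. lam < \<bar>F z\<bar>} \<le> ennreal c"
  shows "emeasure lborel {x. ennreal h \<le> emeasure lborel {y. lam < \<bar>F (x, y)\<bar>}} \<le> ennreal (c / h)"
    and "{x. ennreal h \<le> emeasure lborel {y. lam < \<bar>F (x, y)\<bar>}} \<in> sets borel"
proof -
  define Dset where "Dset = {z. lam < \<bar>F z\<bar>}"
  have "{z \<in> space (borel \<Otimes>\<^sub>M borel). lam < \<bar>F z\<bar>} \<in> sets (borel \<Otimes>\<^sub>M borel)" by measurable
  then have Ds: "Dset \<in> sets (lborel \<Otimes>\<^sub>M lborel)" unfolding Dset_def sets_lborel2 by (simp add: space_pair_measure)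
  have sec: "Pair x -` Dset = {y. lam < \<bar>F (x, y)\<bar>}" for x
    unfolding Dset_def by auto
  have mS: "(\<lambda>x. emeasure lborel {y. lam < \<bar>F (x, y)\<bar>}) \<in> borel_measurable borel"
    using lborel_pair.measurable_emeasure_Pair1[OF Ds] unfolding sec by simp
  define Y where "Y = {x. ennreal h \<le> emeasure lborel {y. lam < \<bar>F (x, y)\<bar>}}"
  have Ys: "Y \<in> sets borel"
  proof -
    have "{x \<in> space borel. ennreal h \<le> emeasure lborel {y. lam < \<bar>F (x, y)\<bar>}} \<in> sets borel"
      using mS by measurable
    then show ?thesis unfolding Y_def by simp
  qed
  have "ennreal h * emeasure lborel Y = (\<integral>\<^sup>+ x. ennreal h * indicator Y x \<partial>lborel)"
    using Ys by (simp add: nn_integral_cmult_indicator)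
  also have "\<dots> \<le> (\<integral>\<^sup>+ x. emeasure lborel (Pair x -` Dset) \<partial>lborel)"
    by (intro nn_integral_mono) (auto simp: sec Y_def indicator_def)
  also have "\<dots> = emeasure (lborel \<Otimes>\<^sub>M lborel) Dset"
    by (rule lborel.emeasure_pair_measure_alt[OF Ds, symmetric])
  also have "\<dots> = emeasure lebesgue {z. lam < \<bar>F z\<bar>}"
  proof -
    have "Dset = {z. lam < \<bar>F z\<bar>}" unfolding Dset_def by simp
    moreover have "{z. lam < \<bar>F z\<bar>} \<in> sets (lborel :: (real \<times> real) measure)"
      using Ds unfolding sets_lborel2 sets_lborel2' Dset_def by simp
    ultimately show ?thesis by (simp add: lborel_prod)
  qed
  also note D
  finally show "emeasure lborel {x. ennreal h \<le> emeasure lborel {y. lam < \<bar>F (x, y)\<bar>}} \<le> ennreal (c / h)"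
    unfolding Y_def[symmetric] using h c by (intro ennreal_div_bound) auto
  show "{x. ennreal h \<le> emeasure lborel {y. lam < \<bar>F (x, y)\<bar>}} \<in> sets borel" using Ys unfolding Y_def .
qed

lemma U_p_unfold:
  assumes "U_p p f"
  shows "f \<in> borel_measurable lebesgue"
    and "AE y in lborel. Lip_class (1/p) (\<lambda>x. f (x, y))"
    and "AE x in lborel. Lip_class (1/p) (\<lambda>y. f (x, y))"
    and "S0 (\<lambda>y. lip_norm (1/p) (\<lambda>x. f (x, y)))"
    and "S0 (\<lambda>x. lip_norm (1/p) (\<lambda>y. f (x, y)))"
  using assms unfolding U_p_def Lorentz_p1_def by (auto simp: AE_completion_iff)

lemma borel_rep2:
  fixes f :: "real \<times> real \<Rightarrow> real"
  assumes "f \<in> borel_measurable lebesgue"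
  obtains F where "F \<in> borel_measurable (borel \<Otimes>\<^sub>M borel)" "AE z in lebesgue. f z = F z"
proof -
  obtain F where "F \<in> borel_measurable lborel" "AE z in lborel. f z = F z"
    using completion_ex_borel_measurable_real[OF assms] by auto
  moreover have "F \<in> borel_measurable (borel \<Otimes>\<^sub>M borel) \<longleftrightarrow> F \<in> borel_measurable lborel"
    by (simp add: borel_prod)
  ultimately show ?thesis using that by (auto simp: AE_completion_iff)
qed

lemma S0_part:
  fixes f :: "real \<times> real \<Rightarrow> real"
  assumes p: "1 \<le> p" and U: "U_p p f"
  shows "S0 f"
proof -
  note UU = U_p_unfold[OF U]
  have mf: "f \<in> borel_measurable lebesgue" by (rule UU(1))
  obtain F where F[measurable]: "F \<in> borel_measurable (borel \<Otimes>\<^sub>M borel)" and eqF: "AE z in lebesgue. f z = F z"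
    using borel_rep2[OF mf] by blast
  have Fc: "(\<lambda>z. F (fst z, snd z)) \<in> borel_measurable (borel \<Otimes>\<^sub>M borel)" by simp
  have Fc2: "(\<lambda>z. F (snd z, fst z)) \<in> borel_measurable (borel \<Otimes>\<^sub>M borel)" by measurable
  define \<psi>1 where "\<psi>1 y = lip_norm (1/p) (\<lambda>x. f (x, y))" for y
  define \<psi>2 where "\<psi>2 x = lip_norm (1/p) (\<lambda>y. f (x, y))" for x
  have S1: "S0 \<psi>1" and S2: "S0 \<psi>2" using UU(4,5) unfolding \<psi>1_def \<psi>2_def by auto
  have m1: "\<psi>1 \<in> borel_measurable lebesgue" and m2: "\<psi>2 \<in> borel_measurable lebesgue"
    using S1 S2 unfolding S0_def by auto
  obtain \<Psi>1 where P1[measurable]: "\<Psi>1 \<in> borel_measurable borel" and e1: "AE y in lborel. \<psi>1 y = \<Psi>1 y"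
    using borel_rep1[OF m1] by blast
  obtain \<Psi>2 where P2[measurable]: "\<Psi>2 \<in> borel_measurable borel" and e2: "AE x in lborel. \<psi>2 x = \<Psi>2 x"
    using borel_rep1[OF m2] by blast
  have eqy: "AE y in lborel. AE x in lborel. f (x, y) = F (x, y)"
    and eqx: "AE x in lborel. AE y in lborel. f (x, y) = F (x, y)"
    using AE_sections[OF eqF] by auto
  have b1: "AE y in lborel. AE x in lborel. \<bar>F (x, y)\<bar> \<le> \<psi>1 y"
    using dir_ess[of "\<lambda>x y. f (x, y)" "\<lambda>x y. F (x, y)", OF eqy UU(2)] unfolding \<psi>1_def by simp
  have b2: "AE x in lborel. AE y in lborel. \<bar>F (x, y)\<bar> \<le> \<psi>2 x"
    using dir_ess[of "\<lambda>y x. f (x, y)" "\<lambda>y x. F (x, y)", OF eqx UU(3)] unfolding \<psi>2_def by simp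
  have c1: "AE z in lebesgue. \<bar>F z\<bar> \<le> \<Psi>1 (snd z)"
  proof (rule AE_from_sections_y)
    show "Measurable.pred (borel \<Otimes>\<^sub>M borel) (\<lambda>z. \<bar>F z\<bar> \<le> \<Psi>1 (snd z))" by measurable
    show "AE y in lborel. AE x in lborel. \<bar>F (x, y)\<bar> \<le> \<Psi>1 (snd (x, y))"
      using b1 e1 by eventually_elim simp
  qed
  have c2: "AE z in lebesgue. \<bar>F z\<bar> \<le> \<Psi>2 (fst z)"
  proof (rule AE_from_sections_x)
    show "Measurable.pred (borel \<Otimes>\<^sub>M borel) (\<lambda>z. \<bar>F z\<bar> \<le> \<Psi>2 (fst z))" by measurable
    show "AE x in lborel. AE y in lborel. \<bar>F (x, y)\<bar> \<le> \<Psi>2 (fst (x, y))"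
      using b2 e2 by eventually_elim simp
  qed
  have fin: "emeasure lebesgue {z. s < \<bar>f z\<bar>} < \<infinity>" if s: "s > 0" for s
  proof -
    define A where "A = {x. s < \<Psi>2 x}"
    define B where "B = {y. s < \<Psi>1 y}"
    have As: "A \<in> sets borel" and Bs: "B \<in> sets borel"
    proof -
      have "\<Psi>2 -` {s<..} \<inter> space borel \<in> sets borel" by (rule measurable_sets[OF P2]) simp
      then show "A \<in> sets borel" unfolding A_def by (simp add: vimage_def)
      have "\<Psi>1 -` {s<..} \<inter> space borel \<in> sets borel" by (rule measurable_sets[OF P1]) simp
      then show "B \<in> sets borel" unfolding B_def by (simp add: vimage_def)
    qed
    have "emeasure lborel A \<le> emeasure lebesgue {x. s < \<bar>\<psi>2 x\<bar>}"
      unfolding A_def by (rule level_le[OF m2 P2 e2])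
    also have "\<dots> < \<infinity>" using S2 s unfolding S0_def by auto
    finally obtain u where u: "emeasure lborel A = ennreal u" "0 \<le> u"
      by (cases "emeasure lborel A") auto
    have "emeasure lborel B \<le> emeasure lebesgue {x. s < \<bar>\<psi>1 x\<bar>}"
      unfolding B_def by (rule level_le[OF m1 P1 e1])
    also have "\<dots> < \<infinity>" using S1 s unfolding S0_def by auto
    finally obtain v where v: "emeasure lborel B = ennreal v" "0 \<le> v"
      by (cases "emeasure lborel B") auto
    note R = rect_bound[OF As Bs, of u v]
    have "emeasure lebesgue {z. s < \<bar>f z\<bar>} \<le> emeasure lebesgue (A \<times> B)"
    proof (rule emeasure_mono_AE)
      show "AE z in lebesgue. z \<in> {z. s < \<bar>f z\<bar>} \<longrightarrow> z \<in> A \<times> B"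
        using eqF c1 c2
      proof eventually_elim
        case (elim z)
        show ?case
        proof
          assume "z \<in> {z. s < \<bar>f z\<bar>}"
          then have "s < \<bar>F z\<bar>" using elim(1) by simp
          then have "s < \<Psi>2 (fst z)" "s < \<Psi>1 (snd z)" using elim(2,3) by linarith+
          then show "z \<in> A \<times> B" unfolding A_def B_def by (cases z) simp
        qed
      qed
      show "A \<times> B \<in> sets lebesgue" using R u v by simp
    qed
    also have "\<dots> \<le> ennreal (u * v)" using R u v by simp
    also have "\<dots> < \<infinity>" by simp
    finally show ?thesis .
  qed
  show ?thesis unfolding S0_def using mf fin by auto
qed

lemma phi_props:
  fixes f F :: "real \<Rightarrow> real \<Rightarrow> real" and \<alpha> :: real
  assumes F[measurable]: "(\<lambda>z. F (fst z) (snd z)) \<in> borel_measurable (borel \<Otimes>\<^sub>M borel)"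
    and a: "\<alpha> > 0"
    and eq: "AE y in lborel. AE x in lborel. f x y = F x y"
    and lip: "AE y in lborel. Lip_class \<alpha> (\<lambda>x. f x y)"
    and S: "S0 (\<lambda>y. lip_norm \<alpha> (\<lambda>x. f x y))"
  obtains \<Phi> where "\<Phi> \<in> borel_measurable borel"
    "AE y in lborel. real_of_ereal (lip_semi \<alpha> (\<lambda>x. f x y)) = \<Phi> y \<and> lip_semi \<alpha> (\<lambda>x. F x y) = ereal (\<Phi> y) \<and> 0 \<le> \<Phi> y"
    "(\<lambda>y. real_of_ereal (lip_semi \<alpha> (\<lambda>x. f x y))) \<in> borel_measurable lebesgue"
    "\<And>u. u > 0 \<Longrightarrow> emeasure lebesgue {y. u < \<bar>real_of_ereal (lip_semi \<alpha> (\<lambda>x. f x y))\<bar>} < \<infinity>"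
proof -
  obtain \<Phi> where P[measurable]: "\<Phi> \<in> borel_measurable borel"
    and ae: "AE y in lborel. lip_semi \<alpha> (\<lambda>x. F x y) = ereal (\<Phi> y) \<and> lip_semi \<alpha> (\<lambda>x. f x y) = ereal (\<Phi> y)"
    using dir_lip[OF F a eq lip] by blast
  define \<phi> where "\<phi> y = real_of_ereal (lip_semi \<alpha> (\<lambda>x. f x y))" for y
  define \<psi> where "\<psi> y = lip_norm \<alpha> (\<lambda>x. f x y)" for y
  have ae2: "AE y in lborel. \<phi> y = \<Phi> y \<and> lip_semi \<alpha> (\<lambda>x. F x y) = ereal (\<Phi> y) \<and> 0 \<le> \<Phi> y"
    using ae
  proof (rule eventually_mono)
    fix y assume "lip_semi \<alpha> (\<lambda>x. F x y) = ereal (\<Phi> y) \<and> lip_semi \<alpha> (\<lambda>x. f x y) = ereal (\<Phi> y)"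
    moreover have "0 \<le> lip_semi \<alpha> (\<lambda>x. F x y)" by (rule lip_semi_nonneg)
    ultimately show "\<phi> y = \<Phi> y \<and> lip_semi \<alpha> (\<lambda>x. F x y) = ereal (\<Phi> y) \<and> 0 \<le> \<Phi> y"
      unfolding \<phi>_def by simp
  qed
  have mphi: "\<phi> \<in> borel_measurable lebesgue"
  proof (rule ae_eq_measurable_completion)
    show "\<Phi> \<in> borel_measurable lebesgue" using measurable_completion[of \<Phi> lborel borel] by simp
    show "AE x in lebesgue. \<phi> x = \<Phi> x" using ae2 by (auto simp: AE_completion_iff elim!: eventually_mono)
  qed
  have mpsi: "\<psi> \<in> borel_measurable lebesgue" using S unfolding S0_def \<psi>_def by simp
  have le: "AE y in lborel. \<bar>\<phi> y\<bar> \<le> \<psi> y"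
    using ae lip
  proof eventually_elim
    case (elim y)
    have "0 \<le> ess_norm (\<lambda>x. f x y)" by (rule ess_norm_nonneg)
    then have "0 \<le> real_of_ereal (ess_norm (\<lambda>x. f x y))" by (simp add: real_of_ereal_pos)
    moreover have "0 \<le> \<Phi> y" using elim(1) lip_semi_nonneg[of \<alpha> "\<lambda>x. F x y"] by simp
    ultimately show ?case using elim(1) unfolding \<phi>_def \<psi>_def lip_norm_def by simp
  qed
  have fin: "emeasure lebesgue {y. u < \<bar>\<phi> y\<bar>} < \<infinity>" if u: "u > 0" for u
  proof -
    have "emeasure lebesgue {y. u < \<bar>\<phi> y\<bar>} \<le> emeasure lebesgue {y. u < \<bar>\<psi> y\<bar>}"
    proof (rule emeasure_mono_AE)
      show "AE x in lebesgue. x \<in> {y. u < \<bar>\<phi> y\<bar>} \<longrightarrow> x \<in> {y. u < \<bar>\<psi> y\<bar>}"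
        using le by (auto simp: AE_completion_iff elim!: eventually_mono)
      show "{y. u < \<bar>\<psi> y\<bar>} \<in> sets lebesgue" by (rule level_sets_lebesgue[OF mpsi])
    qed
    also have "\<dots> < \<infinity>" using S u unfolding S0_def \<psi>_def by auto
    finally show ?thesis .
  qed
  show ?thesis
    by (rule that[OF P ae2[unfolded \<phi>_def] mphi[unfolded \<phi>_def] fin[unfolded \<phi>_def]])
qed

lemma powr_h_bound:
  fixes t p :: real
  assumes t: "t > 0" and p: "1 \<le> p"
  shows "(8 * sqrt t) powr (1/p) \<le> 8 * t powr (1 / (2 * p))"
proof -
  have "(8 * sqrt t) powr (1/p) = 8 powr (1/p) * sqrt t powr (1/p)"
    using t by (simp add: powr_mult)
  also have "sqrt t powr (1/p) = t powr (1 / (2 * p))"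
    using t by (simp add: powr_half_sqrt[symmetric] powr_powr)
  also have "8 powr (1/p) \<le> 8 powr (1::real)" using p by (intro powr_mono) auto
  then have "8 powr (1/p) * t powr (1 / (2 * p)) \<le> 8 * t powr (1 / (2 * p))"
    by (intro mult_right_mono) auto
  finally show ?thesis .
qed

lemma null_AE_not:
  assumes "S \<in> sets lborel" "emeasure lborel S = 0"
  shows "AE x in lborel. x \<notin> S"
  using assms by (intro AE_not_in) (auto simp: null_sets_def)

lemma main_ineq:
  fixes f :: "real \<times> real \<Rightarrow> real" and p t :: real
  assumes p: "1 \<le> p" and U: "U_p p f" and t: "0 < t"
  shows "rearr f t - rearr f (2 * t) \<le>
          8 * t powr (1 / (2 * p)) *
            (rearr (\<lambda>y. real_of_ereal (lip_semi (1/p) (\<lambda>x. f (x, y)))) (sqrt t / 2)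
           + rearr (\<lambda>x. real_of_ereal (lip_semi (1/p) (\<lambda>y. f (x, y)))) (sqrt t / 2))"
proof -
  define \<phi>1 where "\<phi>1 y = real_of_ereal (lip_semi (1/p) (\<lambda>x. f (x, y)))" for y
  define \<phi>2 where "\<phi>2 x = real_of_ereal (lip_semi (1/p) (\<lambda>y. f (x, y)))" for x
  have a0: "0 < 1/p" using p by simp
  note UU = U_p_unfold[OF U]
  have mf: "f \<in> borel_measurable lebesgue" by (rule UU(1))
  have Sf: "S0 f" by (rule S0_part[OF p U])
  obtain F where F[measurable]: "F \<in> borel_measurable (borel \<Otimes>\<^sub>M borel)" and eqF: "AE z in lebesgue. f z = F z"
    using borel_rep2[OF mf] by blast
  have Fc: "(\<lambda>z. F (fst z, snd z)) \<in> borel_measurable (borel \<Otimes>\<^sub>M borel)" by simp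
  have Fc2: "(\<lambda>z. F (snd z, fst z)) \<in> borel_measurable (borel \<Otimes>\<^sub>M borel)" by measurable
  have eqy: "AE y in lborel. AE x in lborel. f (x, y) = F (x, y)"
    and eqx: "AE x in lborel. AE y in lborel. f (x, y) = F (x, y)"
    using AE_sections[OF eqF] by auto
  obtain \<Phi>1 where P1[measurable]: "\<Phi>1 \<in> borel_measurable borel"
    and ae1: "AE y in lborel. \<phi>1 y = \<Phi>1 y \<and> lip_semi (1/p) (\<lambda>x. F (x, y)) = ereal (\<Phi>1 y) \<and> 0 \<le> \<Phi>1 y"
    and m1: "\<phi>1 \<in> borel_measurable lebesgue"
    and fin1: "\<And>u. u > 0 \<Longrightarrow> emeasure lebesgue {y. u < \<bar>\<phi>1 y\<bar>} < \<infinity>"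
    using phi_props[of "\<lambda>x y. F (x, y)" "1/p" "\<lambda>x y. f (x, y)", OF Fc a0 eqy UU(2) UU(4)]
    unfolding \<phi>1_def by blast
  obtain \<Phi>2 where P2[measurable]: "\<Phi>2 \<in> borel_measurable borel"
    and ae2: "AE x in lborel. \<phi>2 x = \<Phi>2 x \<and> lip_semi (1/p) (\<lambda>y. F (x, y)) = ereal (\<Phi>2 x) \<and> 0 \<le> \<Phi>2 x"
    and m2: "\<phi>2 \<in> borel_measurable lebesgue"
    and fin2: "\<And>u. u > 0 \<Longrightarrow> emeasure lebesgue {x. u < \<bar>\<phi>2 x\<bar>} < \<infinity>"
    using phi_props[of "\<lambda>y x. F (x, y)" "1/p" "\<lambda>y x. f (x, y)", OF Fc2 a0 eqx UU(3) UU(5)]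
    unfolding \<phi>2_def by blast
  define s where "s = sqrt t / 2"
  have s0: "s > 0" unfolding s_def using t by simp
  note ne1 = rearr_nonempty[OF m1 fin1 s0]
  note ne2 = rearr_nonempty[OF m2 fin2 s0]
  have fS: "\<And>u. u > 0 \<Longrightarrow> emeasure lebesgue {z. u < \<bar>f z\<bar>} < \<infinity>" using Sf unfolding S0_def by auto
  have t2: "2 * t > 0" using t by simp
  note nef = rearr_nonempty[OF mf fS t2]
  define a where "a = rearr \<phi>1 s"
  define b where "b = rearr \<phi>2 s"
  define lam where "lam = rearr f (2 * t)"
  have a_ge: "0 \<le> a" unfolding a_def by (rule rearr_nonneg[OF ne1])
  have b_ge: "0 \<le> b" unfolding b_def by (rule rearr_nonneg[OF ne2])
  have lam_ge: "0 \<le> lam" unfolding lam_def by (rule rearr_nonneg[OF nef])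
  have lev1: "emeasure lebesgue {y. a < \<bar>\<phi>1 y\<bar>} \<le> ennreal s" unfolding a_def by (rule rearr_level[OF m1 ne1])
  have lev2: "emeasure lebesgue {x. b < \<bar>\<phi>2 x\<bar>} \<le> ennreal s" unfolding b_def by (rule rearr_level[OF m2 ne2])
  have levf: "emeasure lebesgue {z. lam < \<bar>f z\<bar>} \<le> ennreal (2 * t)" unfolding lam_def by (rule rearr_level[OF mf nef])
  define C where "C = 8 * t powr (1 / (2 * p))"
  have C0: "0 \<le> C" unfolding C_def by simp
  show ?thesis unfolding \<phi>1_def[symmetric] \<phi>2_def[symmetric] s_def[symmetric] a_def[symmetric] b_def[symmetric]
    lam_def[symmetric] C_def[symmetric]
  proof (rule ccontr)
    assume H: "\<not> rearr f t - lam \<le> C * (a + b)"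
    define \<mu> where "\<mu> = lam + C * (a + b)"
    have mu0: "0 \<le> \<mu>" unfolding \<mu>_def using lam_ge C0 a_ge b_ge by simp
    have mu_lt: "\<mu> < rearr f t" using H unfolding \<mu>_def by simp
    have Gbig: "ennreal t < emeasure lebesgue {z. \<mu> < \<bar>f z\<bar>}" by (rule rearr_lower[OF mu0 mu_lt])
    define h where "h = 8 * sqrt t"
    have h0: "h > 0" unfolding h_def using t by simp
    have hC: "h powr (1/p) \<le> C" unfolding h_def C_def by (rule powr_h_bound[OF t p])
    have K1: "lam + a * h powr (1/p) \<le> \<mu>"
    proof -
      have "a * h powr (1/p) \<le> a * C" using hC a_ge by (intro mult_left_mono) auto
      also have "\<dots> \<le> C * (a + b)" using C0 b_ge by (simp add: algebra_simps)
      finally show ?thesis unfolding \<mu>_def by simp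
    qed
    have K2: "lam + b * h powr (1/p) \<le> \<mu>"
    proof -
      have "b * h powr (1/p) \<le> b * C" using hC b_ge by (intro mult_left_mono) auto
      also have "\<dots> \<le> C * (a + b)" using C0 a_ge by (simp add: algebra_simps)
      finally show ?thesis unfolding \<mu>_def by simp
    qed
    have mF: "F \<in> borel_measurable lebesgue"
    proof -
      have "F \<in> borel_measurable lborel" using F by (simp add: borel_prod)
      then show ?thesis by (rule measurable_completion)
    qed
    have DF: "emeasure lebesgue {z. lam < \<bar>F z\<bar>} \<le> ennreal (2 * t)"
    proof -
      have "emeasure lebesgue {z. lam < \<bar>F z\<bar>} = emeasure lebesgue {z. lam < \<bar>f z\<bar>}"
        using eqF by (intro emeasure_eq_AE level_sets_lebesgue mF mf) (auto elim!: eventually_mono)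
      then show ?thesis using levf by simp
    qed
    define Y1 where "Y1 = {y. ennreal h \<le> emeasure lborel {x. lam < \<bar>F (x, y)\<bar>}}"
    define X2 where "X2 = {x. ennreal h \<le> emeasure lborel {y. lam < \<bar>F (x, y)\<bar>}}"
    have t2h: "2 * t / h = sqrt t / 4"
      unfolding h_def using t by (simp add: field_simps)
    have Y1m: "emeasure lborel Y1 \<le> ennreal (sqrt t / 4)" and Y1s: "Y1 \<in> sets borel"
      using cheb_y[OF F h0 _ DF] t t2h unfolding Y1_def by auto
    have X2m: "emeasure lborel X2 \<le> ennreal (sqrt t / 4)" and X2s: "X2 \<in> sets borel"
      using cheb_x[OF F h0 _ DF] t t2h unfolding X2_def by auto
    define Ac where "Ac = {y. a < \<Phi>1 y}"
    define Bc where "Bc = {x. b < \<Phi>2 x}"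
    have Acs: "Ac \<in> sets borel"
    proof -
      have "\<Phi>1 -` {a<..} \<inter> space borel \<in> sets borel" by (rule measurable_sets[OF P1]) simp
      then show ?thesis unfolding Ac_def by (simp add: vimage_def)
    qed
    have Bcs: "Bc \<in> sets borel"
    proof -
      have "\<Phi>2 -` {b<..} \<inter> space borel \<in> sets borel" by (rule measurable_sets[OF P2]) simp
      then show ?thesis unfolding Bc_def by (simp add: vimage_def)
    qed
    have ae1': "AE y in lborel. \<phi>1 y = \<Phi>1 y" using ae1 by (auto elim!: eventually_mono)
    have ae2': "AE x in lborel. \<phi>2 x = \<Phi>2 x" using ae2 by (auto elim!: eventually_mono)
    have Acm: "emeasure lborel Ac \<le> ennreal s"
      unfolding Ac_def using level_le[OF m1 P1 ae1', of a] lev1 by simp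
    have Bcm: "emeasure lborel Bc \<le> ennreal s"
      unfolding Bc_def using level_le[OF m2 P2 ae2', of b] lev2 by simp
    define u where "u = sqrt t / 4 + s"
    have u0: "0 \<le> u" unfolding u_def s_def using t by simp
    have Xm: "emeasure lborel (X2 \<union> Bc) \<le> ennreal u"
    proof -
      have "emeasure lborel (X2 \<union> Bc) \<le> emeasure lborel X2 + emeasure lborel Bc"
        using X2s Bcs by (intro emeasure_subadditive) auto
      also have "\<dots> \<le> ennreal (sqrt t / 4) + ennreal s" using X2m Bcm by (intro add_mono)
      also have "\<dots> = ennreal u" unfolding u_def by (rule ennreal_plus[symmetric]) (use s0 t in auto)
      finally show ?thesis .
    qed
    have Ym: "emeasure lborel (Y1 \<union> Ac) \<le> ennreal u"
    proof -
      have "emeasure lborel (Y1 \<union> Ac) \<le> emeasure lborel Y1 + emeasure lborel Ac"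
        using Y1s Acs by (intro emeasure_subadditive) auto
      also have "\<dots> \<le> ennreal (sqrt t / 4) + ennreal s" using Y1m Acm by (intro add_mono)
      also have "\<dots> = ennreal u" unfolding u_def by (rule ennreal_plus[symmetric]) (use s0 t in auto)
      finally show ?thesis .
    qed
    have XYs: "X2 \<union> Bc \<in> sets borel" "Y1 \<union> Ac \<in> sets borel" using X2s Bcs Y1s Acs by auto
    note R = rect_bound[OF XYs Xm Ym u0 u0]
    have uu: "u * u < t"
    proof -
      have uu: "u = 3 / 4 * sqrt t" unfolding u_def s_def by simp
      have "u * u = 9 / 16 * t" unfolding uu using t by simp
      then show ?thesis using t by simp
    qed
    have secY: "AE y in lborel. AE x in lborel. \<mu> < \<bar>F (x, y)\<bar> \<longrightarrow> y \<in> Y1 \<union> Ac"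
      using ae1
    proof (rule eventually_mono)
      fix y assume gy: "\<phi>1 y = \<Phi>1 y \<and> lip_semi (1/p) (\<lambda>x. F (x, y)) = ereal (\<Phi>1 y) \<and> 0 \<le> \<Phi>1 y"
      show "AE x in lborel. \<mu> < \<bar>F (x, y)\<bar> \<longrightarrow> y \<in> Y1 \<union> Ac"
      proof (cases "y \<in> Y1 \<union> Ac")
        case True then show ?thesis by simp
      next
        case False
        then have nY: "\<not> ennreal h \<le> emeasure lborel {x. lam < \<bar>F (x, y)\<bar>}" and nA: "\<Phi>1 y \<le> a"
          unfolding Y1_def Ac_def by auto
        have Fy: "(\<lambda>x. F (x, y)) \<in> borel_measurable borel" using section_borel[OF Fc, of y] by simp
        have Lb: "lip_semi (1/p) (\<lambda>x. F (x, y)) \<le> ereal a" using gy nA by simp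
        have zero: "emeasure lborel {x. \<mu> < \<bar>F (x, y)\<bar>} = 0"
        proof (rule ccontr)
          assume "emeasure lborel {x. \<mu> < \<bar>F (x, y)\<bar>} \<noteq> 0"
          from seg_lemma[OF Fy h0 K1 lip_bound[OF Lb _ _ a0] this] nY show False by simp
        qed
        have "{x. \<mu> < \<bar>F (x, y)\<bar>} \<in> sets lborel"
        proof -
          have "(\<lambda>x. F (x, y)) -` {x. \<mu> < \<bar>x\<bar>} \<inter> space borel \<in> sets borel"
            by (rule measurable_sets[OF Fy]) (simp add: open_Collect_less)
          then show ?thesis by (simp add: vimage_def)
        qed
        from null_AE_not[OF this zero] show ?thesis by (rule eventually_mono) simp
      qed
    qed
    have secX: "AE x in lborel. AE y in lborel. \<mu> < \<bar>F (x, y)\<bar> \<longrightarrow> x \<in> X2 \<union> Bc"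
      using ae2
    proof (rule eventually_mono)
      fix x assume gx: "\<phi>2 x = \<Phi>2 x \<and> lip_semi (1/p) (\<lambda>y. F (x, y)) = ereal (\<Phi>2 x) \<and> 0 \<le> \<Phi>2 x"
      show "AE y in lborel. \<mu> < \<bar>F (x, y)\<bar> \<longrightarrow> x \<in> X2 \<union> Bc"
      proof (cases "x \<in> X2 \<union> Bc")
        case True then show ?thesis by simp
      next
        case False
        then have nX: "\<not> ennreal h \<le> emeasure lborel {y. lam < \<bar>F (x, y)\<bar>}" and nB: "\<Phi>2 x \<le> b"
          unfolding X2_def Bc_def by auto
        have Fx: "(\<lambda>y. F (x, y)) \<in> borel_measurable borel" using section_borel[OF Fc2, of x] by simp
        have Lb: "lip_semi (1/p) (\<lambda>y. F (x, y)) \<le> ereal b" using gx nB by simp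
        have zero: "emeasure lborel {y. \<mu> < \<bar>F (x, y)\<bar>} = 0"
        proof (rule ccontr)
          assume "emeasure lborel {y. \<mu> < \<bar>F (x, y)\<bar>} \<noteq> 0"
          from seg_lemma[OF Fx h0 K2 lip_bound[OF Lb _ _ a0] this] nX show False by simp
        qed
        have "{y. \<mu> < \<bar>F (x, y)\<bar>} \<in> sets lborel"
        proof -
          have "(\<lambda>y. F (x, y)) -` {x. \<mu> < \<bar>x\<bar>} \<inter> space borel \<in> sets borel"
            by (rule measurable_sets[OF Fx]) (simp add: open_Collect_less)
          then show ?thesis by (simp add: vimage_def)
        qed
        from null_AE_not[OF this zero] show ?thesis by (rule eventually_mono) simp
      qed
    qed
    have XYm: "X2 \<union> Bc \<in> sets borel" "Y1 \<union> Ac \<in> sets borel" by (fact XYs)+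
    have cY: "AE z in lebesgue. \<mu> < \<bar>F z\<bar> \<longrightarrow> snd z \<in> Y1 \<union> Ac"
    proof (rule AE_from_sections_y)
      have "(\<lambda>z. snd z) -` (Y1 \<union> Ac) \<inter> space (borel \<Otimes>\<^sub>M borel) \<in> sets (borel \<Otimes>\<^sub>M borel)"
        by (rule measurable_sets[OF measurable_snd]) (use XYm in simp)
      then have [measurable]: "Measurable.pred (borel \<Otimes>\<^sub>M borel) (\<lambda>z. snd z \<in> Y1 \<union> Ac)"
        by (simp add: pred_def vimage_def Int_def conj_commute)
      show "Measurable.pred (borel \<Otimes>\<^sub>M borel) (\<lambda>z. \<mu> < \<bar>F z\<bar> \<longrightarrow> snd z \<in> Y1 \<union> Ac)"
        by measurable
      show "AE y in lborel. AE x in lborel. \<mu> < \<bar>F (x, y)\<bar> \<longrightarrow> snd (x, y) \<in> Y1 \<union> Ac"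
        using secY by simp
    qed
    have cX: "AE z in lebesgue. \<mu> < \<bar>F z\<bar> \<longrightarrow> fst z \<in> X2 \<union> Bc"
    proof (rule AE_from_sections_x)
      have "(\<lambda>z. fst z) -` (X2 \<union> Bc) \<inter> space (borel \<Otimes>\<^sub>M borel) \<in> sets (borel \<Otimes>\<^sub>M borel)"
        by (rule measurable_sets[OF measurable_fst]) (use XYm in simp)
      then have [measurable]: "Measurable.pred (borel \<Otimes>\<^sub>M borel) (\<lambda>z. fst z \<in> X2 \<union> Bc)"
        by (simp add: pred_def vimage_def Int_def conj_commute)
      show "Measurable.pred (borel \<Otimes>\<^sub>M borel) (\<lambda>z. \<mu> < \<bar>F z\<bar> \<longrightarrow> fst z \<in> X2 \<union> Bc)"
        by measurable
      show "AE x in lborel. AE y in lborel. \<mu> < \<bar>F (x, y)\<bar> \<longrightarrow> fst (x, y) \<in> X2 \<union> Bc"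
        using secX by simp
    qed
    have "emeasure lebesgue {z. \<mu> < \<bar>f z\<bar>} \<le> emeasure lebesgue ((X2 \<union> Bc) \<times> (Y1 \<union> Ac))"
    proof (rule emeasure_mono_AE)
      show "AE z in lebesgue. z \<in> {z. \<mu> < \<bar>f z\<bar>} \<longrightarrow> z \<in> (X2 \<union> Bc) \<times> (Y1 \<union> Ac)"
        using eqF cX cY
      proof eventually_elim
        case (elim z)
        then show ?case by (cases z) simp
      qed
      show "(X2 \<union> Bc) \<times> (Y1 \<union> Ac) \<in> sets lebesgue" by (rule R(2))
    qed
    also have "\<dots> \<le> ennreal (u * u)" by (rule R(1))
    also have "\<dots> < ennreal t" using uu t by (intro ennreal_lessI)
    finally show False using Gbig by simp
  qed
qed

theorem mainTheorem5:
  fixes p :: real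
  assumes "1 \<le> p"
  shows "(\<forall>f. U_p p f \<longrightarrow> S0 f) \<and>
    (\<exists>c>0. \<forall>f. U_p p f \<longrightarrow>
       (\<forall>t>0. rearr f t - rearr f (2 * t) \<le>
          c * t powr (1 / (2 * p)) *
            (rearr (\<lambda>y. real_of_ereal (lip_semi (1/p) (\<lambda>x. f (x, y)))) (sqrt t / 2)
           + rearr (\<lambda>x. real_of_ereal (lip_semi (1/p) (\<lambda>y. f (x, y)))) (sqrt t / 2))))"
proof (intro conjI allI impI)
  fix f :: "real \<times> real \<Rightarrow> real"
  assume "U_p p f"
  then show "S0 f" by (rule S0_part[OF assms])
next
  show "\<exists>c>0. \<forall>f. U_p p f \<longrightarrow>
       (\<forall>t>0. rearr f t - rearr f (2 * t) \<le>
          c * t powr (1 / (2 * p)) *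
            (rearr (\<lambda>y. real_of_ereal (lip_semi (1/p) (\<lambda>x. f (x, y)))) (sqrt t / 2)
           + rearr (\<lambda>x. real_of_ereal (lip_semi (1/p) (\<lambda>y. f (x, y)))) (sqrt t / 2)))"
  proof (rule exI[of _ 8], intro conjI allI impI)
    fix f :: "real \<times> real \<Rightarrow> real" and t :: real
    assume "U_p p f" "0 < t"
    then show "rearr f t - rearr f (2 * t) \<le>
          8 * t powr (1 / (2 * p)) *
            (rearr (\<lambda>y. real_of_ereal (lip_semi (1/p) (\<lambda>x. f (x, y)))) (sqrt t / 2)
           + rearr (\<lambda>x. real_of_ereal (lip_semi (1/p) (\<lambda>y. f (x, y)))) (sqrt t / 2))"
      by (rule main_ineq[OF assms])
  qed simp
qed

end
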